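(* For $n\ge0$ let $A_n=\sum_{r=0}^n n!/r!$. A prime $p$ satisfies $0!-1!+2!-3!+\cdots+(-1)^{p-1}(p-1)!\equiv 0\pmod p$ if and only if $p$ divides $A_{p-1}$. *)

theory Defs
  imports "HOL-Computational_Algebra.Primes"
begin

text \<open>A_n = sum_{r=0}^n n!/r!; each term is an integer since r <= n, so nat division is exact.\<close>
definition A :: "nat \<Rightarrow> nat" where
  "A n = (\<Sum>r=0..n. fact n div fact r)"

end

theory Submission
  imports Defs "HOL-Number_Theory.Cong"
begin

lemma key:
  fixes p m :: nat
  assumes "m \<le> p - 1" "p \<ge> 2"
  shows "[int (\<Prod>{p-m..p-1}) = (-1)^m * fact m] (mod int p)"
  using assms(1)
proof (induction m)
  case 0
  have "{p..p-1} = {}" using assms by auto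
  then show ?case by simp
next
  case (Suc m)
  have IH: "[int (\<Prod>{p-m..p-1}) = (-1)^m * fact m] (mod int p)"
    using Suc by simp
  have set: "{p - Suc m..p-1} = insert (p - Suc m) {p-m..p-1}" using Suc.prems by auto
  have nin: "p - Suc m \<notin> {p-m..p-1}" using Suc.prems by auto
  have "int (\<Prod>{p - Suc m..p-1}) = int (p - Suc m) * int (\<Prod>{p-m..p-1})"
    unfolding set using nin by simp
  moreover have "[int (p - Suc m) = - int (Suc m)] (mod int p)"
  proof -
    have "int (p - Suc m) = - int (Suc m) + int p" using Suc.prems assms by simp
    then show ?thesis by (simp add: cong_iff_dvd_diff)
  qed
  ultimately have "[int (\<Prod>{p - Suc m..p-1}) = (- int (Suc m)) * ((-1)^m * fact m)] (mod int p)"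
    using IH by (simp add: cong_mult)
  moreover have "(- int (Suc m)) * ((-1)^m * fact m) = (-1::int)^(Suc m) * fact (Suc m)"
    by (simp add: fact_Suc algebra_simps)
  ultimately show ?case by simp
qed

theorem lemma5p2:
  fixes p :: nat
  assumes "prime p"
  shows "int p dvd (\<Sum>k=0..p-1. (-1::int)^k * fact k) \<longleftrightarrow> p dvd A (p - 1)"
proof -
  have p2: "p \<ge> 2" using assms prime_ge_2_nat by blast
  have trm: "[int (fact (p-1) div fact r) = (-1)^(p-1-r) * fact (p-1-r)] (mod int p)"
    if r: "r \<in> {0..p-1}" for r
  proof -
    have "fact (p-1) div fact r = (\<Prod>{r+1..p-1} :: nat)" using r by (simp add: fact_div_fact)
    also have "{r+1..p-1} = {p-(p-1-r)..p-1}" using r p2 by auto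
    finally show ?thesis using key[of "p-1-r" p] p2 by simp
  qed
  have "int (A (p-1)) = (\<Sum>r=0..p-1. int (fact (p-1) div fact r))"
    by (simp add: A_def)
  moreover have "[(\<Sum>r=0..p-1. int (fact (p-1) div fact r)) = (\<Sum>r=0..p-1. (-1::int)^(p-1-r) * fact (p-1-r))] (mod int p)"
    by (rule cong_sum) (use trm in blast)
  moreover have "(\<Sum>r=0..p-1. (-1::int)^(p-1-r) * fact (p-1-r)) = (\<Sum>k=0..p-1. (-1::int)^k * fact k)"
    using sum.atLeastAtMost_rev[of "\<lambda>k. (-1::int)^k * fact k" 0 "p-1"] by simp
  ultimately have c: "[int (A (p-1)) = (\<Sum>k=0..p-1. (-1::int)^k * fact k)] (mod int p)" by simp
  have "p dvd A (p-1) \<longleftrightarrow> int p dvd int (A (p-1))" by simp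
  also have "\<dots> \<longleftrightarrow> int p dvd (\<Sum>k=0..p-1. (-1::int)^k * fact k)"
    using c cong_dvd_iff by blast
  finally show ?thesis by simp
qed

end
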